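(* Let $P$ be a simple closed $n$-gon, $n\ge4$, in $\mathbb{R}^2$, and let $a\in\mathbb{R}^2\setminus P$. If every ray emanating from $a$ meets $P$, then $a$ sees via $\mathbb{R}^2\setminus P$ two non-adjacent vertices of $P$, i.e. there are vertices $c,c'$ of $P$ that are not joined by an edge of $P$ (and are distinct) with $]a,c[\,\subset\mathbb{R}^2\setminus P$ and $]a,c'[\,\subset\mathbb{R}^2\setminus P$.
   Context: A simple closed $n$-gon is $P=\bigcup_{i=1}^n[p_{i-1},p_i]$ with distinct vertices $p_0,\dots,p_{n-1}$, $p_n=p_0$, whose edges meet only in common endpoints of consecutive edges. A ray emanating from $a$ is a set $\{a+\lambda w:\lambda\ge0\}$ with $w\ne0$. $]x,y[$ denotes the open segment. *)

theory Defs
  imports "HOL-Analysis.Analysis"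
begin

definition poly_edge :: "(nat \<Rightarrow> real^2) \<Rightarrow> nat \<Rightarrow> nat \<Rightarrow> (real^2) set" where
  "poly_edge p n i = closed_segment (p i) (p (Suc i mod n))"

definition polygon :: "(nat \<Rightarrow> real^2) \<Rightarrow> nat \<Rightarrow> (real^2) set" where
  "polygon p n = (\<Union>i<n. poly_edge p n i)"

definition adjacent_idx :: "nat \<Rightarrow> nat \<Rightarrow> nat \<Rightarrow> bool" where
  "adjacent_idx n i j \<longleftrightarrow> j = Suc i mod n \<or> i = Suc j mod n"

definition simple_closed_polygon :: "(nat \<Rightarrow> real^2) \<Rightarrow> nat \<Rightarrow> bool" where
  "simple_closed_polygon p n \<longleftrightarrow> n \<ge> 3 \<and> inj_on p {..<n} \<and>
     (\<forall>i<n. \<forall>j<n. i \<noteq> j \<longrightarrow>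
        poly_edge p n i \<inter> poly_edge p n j \<subseteq>
          (if j = Suc i mod n then {p j} else {}) \<union> (if i = Suc j mod n then {p i} else {}))"

definition ray :: "real^2 \<Rightarrow> real^2 \<Rightarrow> (real^2) set" where
  "ray a w = {a + l *\<^sub>R w | l. l \<ge> 0}"

end

theory Submission
  imports Defs
begin


definition det2 :: "real^2 \<Rightarrow> real^2 \<Rightarrow> real" where
  "det2 u v = u$1 * v$2 - u$2 * v$1"

lemma det2_self[simp]: "det2 u u = 0" by (simp add: det2_def)

lemma edge_sub: "i < n \<Longrightarrow> poly_edge p n i \<subseteq> polygon p n"
  unfolding polygon_def by auto

lemma vert_in: "i < n \<Longrightarrow> p i \<in> polygon p n"
  using edge_sub[of i n p] unfolding poly_edge_def by auto

lemma closed_polygon: "closed (polygon p n)"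
  unfolding polygon_def poly_edge_def by (intro closed_UN) auto

lemma simple_inter:
  assumes "simple_closed_polygon p n" "i < n" "m < n" "i \<noteq> m"
    "q \<in> poly_edge p n i" "q \<in> poly_edge p n m"
  shows "\<exists>j<n. q = p j"
proof -
  have "q \<in> (if m = Suc i mod n then {p m} else {}) \<union> (if i = Suc m mod n then {p i} else {})"
    using assms unfolding simple_closed_polygon_def by blast
  then have "q = p m \<or> q = p i" by (simp split: if_splits)
  then show ?thesis using assms(2,3) by blast
qed

lemma first_hit:
  assumes "d \<noteq> 0" "a \<notin> polygon p n" "ray a d \<inter> polygon p n \<noteq> {}"
  shows "\<exists>l>0. a + l *\<^sub>R d \<in> polygon p n \<and> open_segment a (a + l *\<^sub>R d) \<inter> polygon p n = {}"
proof -
  define L where "L = {l. 0 \<le> l \<and> a + l *\<^sub>R d \<in> polygon p n}"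
  have L: "L = {0..} \<inter> (\<lambda>l. a + l *\<^sub>R d) -` polygon p n" unfolding L_def by auto
  have cl: "closed L" unfolding L
    by (intro closed_Int closed_atLeast continuous_closed_vimage closed_polygon) (intro continuous_intros)
  have ne: "L \<noteq> {}" using assms(3) unfolding L_def ray_def by auto
  have bb: "bdd_below L" unfolding L_def by (rule bdd_belowI[of _ 0]) auto
  define l0 where "l0 = Inf L"
  have l0L: "l0 \<in> L" unfolding l0_def using closed_contains_Inf[OF ne bb cl] .
  have "l0 \<noteq> 0" using l0L assms(2) unfolding L_def by auto
  then have pos: "l0 > 0" using l0L unfolding L_def by auto
  have "open_segment a (a + l0 *\<^sub>R d) \<inter> polygon p n = {}"
  proof (rule ccontr)
    assume "open_segment a (a + l0 *\<^sub>R d) \<inter> polygon p n \<noteq> {}"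
    then obtain q where q: "q \<in> open_segment a (a + l0 *\<^sub>R d)" "q \<in> polygon p n" by blast
    then obtain s where s: "0 < s" "s < 1" "q = (1 - s) *\<^sub>R a + s *\<^sub>R (a + l0 *\<^sub>R d)"
      unfolding in_segment by auto
    have "q = a + (s * l0) *\<^sub>R d" using s(3) by (simp add: algebra_simps)
    then have "s * l0 \<in> L" using q(2) s pos unfolding L_def by auto
    then have "l0 \<le> s * l0" unfolding l0_def using bb by (rule cInf_lower)
    then show False using s pos by (simp add: mult_le_cancel_right2)
  qed
  then show ?thesis using pos l0L unfolding L_def by auto
qed

lemma tri_adj:
  assumes "n \<ge> 4" "i < n" "j < n" "k < n" "i \<noteq> j" "j \<noteq> k" "i \<noteq> k"
    "adjacent_idx n i j" "adjacent_idx n j k" "adjacent_idx n i k"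
  shows False
proof -
  have m: "\<And>x. x < n \<Longrightarrow> (Suc x mod n = Suc x \<and> Suc x < n) \<or> (Suc x mod n = 0 \<and> Suc x = n)"
    by (metis Suc_lessI mod_less mod_self)
  show False
    using m[OF assms(2)] m[OF assms(3)] m[OF assms(4)] assms unfolding adjacent_idx_def by linarith
qed


lemma det2_minus:
  "det2 (u - v) w = det2 u w - det2 v w"
  "det2 w (u - v) = det2 w u - det2 w v"
  by (simp_all add: det2_def algebra_simps)

lemma det2_simps[simp]:
  "det2 (u + v) w = det2 u w + det2 v w"
  "det2 w (u + v) = det2 w u + det2 w v"
  "det2 (c *\<^sub>R u) w = c * det2 u w"
  "det2 w (c *\<^sub>R u) = c * det2 w u"
  "det2 (- u) w = - det2 u w"
  "det2 w (- u) = - det2 w u"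
  by (simp_all add: det2_def algebra_simps)

lemma det2_swap: "det2 u v = - det2 v u" by (simp add: det2_def)

lemma pair_sign:
  fixes x a d u w v1 v2 :: "real^2"
  assumes X: "x - a = l *\<^sub>R d" and l: "l \<noteq> 0"
    and xt: "x = (1-t) *\<^sub>R u + t *\<^sub>R w" "0<t" "t<1"
    and Gw: "det2 d (w - a) \<noteq> 0"
    and v1: "v1 - a = \<alpha>1 *\<^sub>R (x-a) + \<beta>1 *\<^sub>R (w-a)" "\<alpha>1 \<ge> 0" "\<beta>1 > 0"
    and v2: "v2 - a = \<alpha>2 *\<^sub>R (x-a) + \<beta>2 *\<^sub>R (u-a)" "\<alpha>2 \<ge> 0" "\<beta>2 > 0"
  shows "l * det2 d (v1 - a) * det2 (v2-a) (v1-a) > 0 \<and> det2 d (v1-a) * det2 d (v2-a) < 0"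
proof -
  define Gw where "Gw = det2 d (w - a)"
  define Gu where "Gu = det2 d (u - a)"
  define D where "D = det2 (u - a) (w - a)"
  define K where "K = \<alpha>2*\<beta>1*(1-t) + \<beta>2*\<alpha>1*t + \<beta>2*\<beta>1"
  have Xuw: "x - a = (1-t) *\<^sub>R (u - a) + t *\<^sub>R (w - a)" using xt(1) by (simp add: algebra_simps)
  have dx: "det2 d (x - a) = 0" using X by simp
  have "det2 d (x - a) = (1-t)* Gu + t* Gw" unfolding Xuw Gu_def Gw_def by simp
  with dx have s0: "(1-t)* Gu + t* Gw = 0" by simp
  have xw1: "det2 (x - a) (w - a) = l * Gw" using X Gw_def by simp
  have xw2: "det2 (x - a) (w - a) = (1-t) * D" unfolding Xuw D_def by simp
  have ux: "det2 (u - a) (x - a) = t * D" unfolding Xuw D_def by simp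
  have sv1: "det2 d (v1 - a) = \<beta>1 * Gw" unfolding v1(1) Gw_def using dx by simp
  have sv2: "det2 d (v2 - a) = \<beta>2 * Gu" unfolding v2(1) Gu_def using dx by simp
  have dv: "det2 (v2-a) (v1-a) = D * K"
  proof -
    have "det2 (v2-a) (v1-a) = \<alpha>2*\<beta>1*det2 (x-a) (w-a) + \<beta>2*\<alpha>1*det2 (u-a) (x-a) + \<beta>2*\<beta>1*D"
      unfolding v1(1) v2(1) D_def by (simp only: det2_simps det2_self) (simp add: algebra_simps)
    then show ?thesis unfolding K_def xw2 ux by (simp add: algebra_simps)
  qed
  have Kp: "K > 0" unfolding K_def using xt v1 v2
    by (intro add_nonneg_pos add_nonneg_nonneg mult_nonneg_nonneg mult_pos_pos) auto
  have lD: "l * Gw = (1-t) * D" using xw1 xw2 by simp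
  have "(l * (\<beta>1 * Gw) * (D * K)) * (1-t) = \<beta>1 * K * (l* Gw)^2"
  proof -
    have "\<beta>1 * K * (l*Gw)^2 = \<beta>1 * K * (l*Gw) * ((1-t) * D)"
      using lD by (simp add: power2_eq_square)
    then show ?thesis by (simp add: algebra_simps)
  qed
  moreover have "\<beta>1 * K * (l* Gw)^2 > 0" using v1 Kp l Gw Gw_def by simp
  ultimately have g1: "l * (\<beta>1 * Gw) * (D * K) > 0" using xt
    by (metis diff_gt_0_iff_gt zero_less_mult_pos2)
  have Gu_eq: "Gu = - t * Gw / (1-t)" using s0 xt by (simp add: field_simps)
  have "(\<beta>1 * Gw) * (\<beta>2 * Gu) = - (\<beta>1*\<beta>2*t/(1-t)) * Gw^2"
    unfolding Gu_eq by (simp add: power2_eq_square)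
  moreover have "\<beta>1*\<beta>2*t/(1-t) * Gw^2 > 0" using v1 v2 xt Gw Gw_def by simp
  ultimately have g2: "(\<beta>1 * Gw) * (\<beta>2 * Gu) < 0" by linarith
  show ?thesis using g1 g2 sv1 sv2 dv by simp
qed


lemma det2_zero[simp]: "det2 0 v = 0" "det2 v 0 = 0" by (simp_all add: det2_def)

lemma cross01:
  fixes b0 b1 c0 c1 :: real
  assumes "b0 > 0" "c0 < 1" "\<not> (b1 \<ge> 0 \<and> c1 \<le> 1)"
  shows "\<exists>s. 0 < s \<and> s \<le> 1 \<and> (1-s)*b0 + s*b1 \<ge> 0 \<and> (1-s)*c0 + s*c1 \<le> 1 \<and>
     ((1-s)*b0 + s*b1 = 0 \<or> (1-s)*c0 + s*c1 = 1)"
proof -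
  define h where "h s = min ((1-s)*b0 + s*b1) (1 - ((1-s)*c0 + s*c1))" for s
  have c: "continuous_on {0..1} h" unfolding h_def by (intro continuous_intros)
  have "h 1 \<le> 0" "0 \<le> h 0" using assms unfolding h_def by auto
  from IVT2'[of h 1 0 0, OF this _ c] obtain s where s: "0 \<le> s" "s \<le> 1" "h s = 0" by auto
  have "s \<noteq> 0" using s(3) assms unfolding h_def by auto
  then show ?thesis using s unfolding h_def
    by (intro exI[of _ s]) (auto simp: min_def split: if_splits)
qed

lemma cramer:
  fixes q a X W :: "real^2"
  assumes "det2 X W \<noteq> 0"
  shows "q - a = (det2 (q - a) W / det2 X W) *\<^sub>R X + (det2 X (q - a) / det2 X W) *\<^sub>R W"
proof -
  define Q where "Q = q - a"
  have e: "det2 X W *\<^sub>R Q = det2 Q W *\<^sub>R X + det2 X Q *\<^sub>R W"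
    unfolding det2_def by (simp add: vec_eq_iff forall_2 algebra_simps)
  have "Q = (1 / det2 X W) *\<^sub>R (det2 X W *\<^sub>R Q)" using assms by simp
  also have "\<dots> = (det2 Q W / det2 X W) *\<^sub>R X + (det2 X Q / det2 X W) *\<^sub>R W"
    unfolding e by (simp add: scaleR_add_right)
  finally show ?thesis unfolding Q_def .
qed

lemma comb_minus: "((1-s) *\<^sub>R q1 + s *\<^sub>R q2) - a = (1-s) *\<^sub>R (q1 - a) + s *\<^sub>R ((q2::real^2) - a)"
  by (simp add: algebra_simps scaleR_diff_left)


lemma side_vis:
  assumes sp: "simple_closed_polygon p n" and k: "k < n"
    and xe: "x \<in> poly_edge p n k"
    and aP: "a \<notin> polygon p n"
    and vis: "open_segment a x \<inter> polygon p n = {}"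
    and nd: "\<forall>i<n. det2 (x - a) (p i - a) \<noteq> 0"
    and wk: "(w = p k \<and> u = p (Suc k mod n)) \<or> (w = p (Suc k mod n) \<and> u = p k)"
  shows "\<exists>j<n. open_segment a (p j) \<inter> polygon p n = {} \<and>
           (\<exists>\<alpha> \<beta>. \<alpha> \<ge> 0 \<and> \<beta> > 0 \<and> p j - a = \<alpha> *\<^sub>R (x - a) + \<beta> *\<^sub>R (w - a))"
proof -
  have k1: "Suc k mod n < n" using k by auto
  have edge: "poly_edge p n k = closed_segment u w"
    using wk unfolding poly_edge_def by (auto simp: closed_segment_commute)
  have wi: "\<exists>i<n. w = p i" and ui: "\<exists>i<n. u = p i" using wk k k1 by blast+
  have xnv: "\<forall>i<n. x \<noteq> p i" using nd by auto
  have "x \<noteq> u" "x \<noteq> w" using xnv wi ui by auto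
  then have "x \<in> open_segment u w" using xe edge unfolding open_segment_def by auto
  then obtain t where t: "0 < t" "t < 1" "x = (1-t) *\<^sub>R u + t *\<^sub>R w" unfolding in_segment by auto
  define X where "X = x - a"
  define W where "W = w - a"
  define Dl where "Dl = det2 X W"
  have Dl: "Dl \<noteq> 0" using nd wi unfolding Dl_def X_def W_def by auto
  define af where "af q = det2 (q - a) W / Dl" for q
  define bf where "bf q = det2 X (q - a) / Dl" for q
  define Sf where "Sf q = af q + bf q" for q
  have cram: "q - a = af q *\<^sub>R X + bf q *\<^sub>R W" for q
    unfolding af_def bf_def Dl_def using cramer[of X W q a] Dl Dl_def by simp
  have affa: "af ((1-s) *\<^sub>R q1 + s *\<^sub>R q2) = (1-s) * af q1 + s * af q2" for s q1 q2
    unfolding af_def comb_minus by (simp add: add_divide_distrib)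
  have affb: "bf ((1-s) *\<^sub>R q1 + s *\<^sub>R q2) = (1-s) * bf q1 + s * bf q2" for s q1 q2
    unfolding bf_def comb_minus by (simp add: add_divide_distrib)
  have affS: "Sf ((1-s) *\<^sub>R q1 + s *\<^sub>R q2) = (1-s) * Sf q1 + s * Sf q2" for s q1 q2
    unfolding Sf_def affa affb by (simp add: algebra_simps)
  have ax: "af x = 1" "bf x = 0" unfolding af_def bf_def Dl_def X_def by (auto simp: Dl[unfolded Dl_def X_def])
  have aw: "af w = 0" "bf w = 1" unfolding af_def bf_def Dl_def W_def by (auto simp: Dl[unfolded Dl_def W_def])
  have aa: "af a = 0" "bf a = 0" unfolding af_def bf_def by auto
  have Su: "Sf u = 1"
  proof -
    have "Sf x = (1-t) * Sf u + t * Sf w" using t(3) affS by simp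
    then have "1 = (1-t) * Sf u + t" using ax aw unfolding Sf_def by simp
    then have "(1-t) * (Sf u - 1) = 0" by (simp add: algebra_simps)
    then show ?thesis using t by simp
  qed
  have Sedge: "Sf q = 1" if qk: "q \<in> poly_edge p n k" for q
  proof -
    obtain s where "q = (1-s) *\<^sub>R u + s *\<^sub>R w" using qk unfolding edge in_segment by auto
    then have "Sf q = (1-s) * Sf u + s * Sf w" using affS by simp
    then show ?thesis using Su aw unfolding Sf_def by simp
  qed
  define Vt where "Vt = {j. j < n \<and> af (p j) \<ge> 0 \<and> bf (p j) \<ge> 0 \<and> Sf (p j) \<le> 1}"
  have finVt: "finite Vt" unfolding Vt_def by auto
  obtain jw where jw: "jw < n" "w = p jw" using wi by auto
  have jwV: "jw \<in> Vt" unfolding Vt_def using jw aw Sf_def by auto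
  have bnz: "bf (p j) \<noteq> 0" if "j < n" for j
    using nd that Dl unfolding bf_def X_def by auto
  have vpos: "bf (p j) > 0 \<and> Sf (p j) > 0" if "j \<in> Vt" for j
    using that bnz unfolding Vt_def Sf_def by force
  define tau where "tau j = bf (p j) / Sf (p j)" for j
  define tau0 where "tau0 = Min (tau ` Vt)"
  have tmin: "tau0 \<le> tau j" if "j \<in> Vt" for j unfolding tau0_def using finVt that by simp
  have t0in: "tau0 \<in> tau ` Vt" unfolding tau0_def using finVt jwV by (intro Min_in) auto
  define V0 where "V0 = {j \<in> Vt. tau j = tau0}"
  have finV0: "finite V0" "V0 \<noteq> {}" unfolding V0_def using finVt t0in by auto
  define S0 where "S0 = Min ((\<lambda>j. Sf (p j)) ` V0)"
  have smin: "S0 \<le> Sf (p j)" if "j \<in> Vt" "tau j = tau0" for j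
    unfolding S0_def using finV0 that V0_def by simp
  have "S0 \<in> (\<lambda>j. Sf (p j)) ` V0" unfolding S0_def using finV0 by (intro Min_in) auto
  then obtain j0 where j0: "j0 \<in> Vt" "tau j0 = tau0" "Sf (p j0) = S0" unfolding V0_def by auto
  have bad: False if "i \<in> Vt" "tau i < tau0 \<or> (tau i = tau0 \<and> Sf (p i) < S0)" for i
    using that tmin smin by force
  define v where "v = p j0"
  have j0n: "j0 < n" using j0 Vt_def by auto
  have vV: "bf v > 0" "Sf v > 0" "af v \<ge> 0" "Sf v \<le> 1" using vpos[OF j0(1)] j0(1) unfolding v_def Vt_def by auto
  have tau0: "tau0 = bf v / Sf v" using j0 unfolding tau_def v_def by simp
  have t0pos: "tau0 > 0" "tau0 \<le> 1" using vV unfolding tau0 Sf_def by auto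
  define Gf where "Gf q = bf q - tau0 * Sf q" for q
  have affG: "Gf ((1-s) *\<^sub>R q1 + s *\<^sub>R q2) = (1-s) * Gf q1 + s * Gf q2" for s q1 q2
    unfolding Gf_def affb affS by (simp add: algebra_simps)
  have Gneg: "tau i < tau0" if "Gf (p i) < 0" "Sf (p i) > 0" for i
    using that unfolding Gf_def tau_def by (simp add: divide_less_eq)
  have Gneg_a: "af q > 0" if "Gf q < 0" "bf q \<ge> 0" for q
  proof -
    have "tau0 * af q > (1 - tau0) * bf q" using that unfolding Gf_def Sf_def by (simp add: algebra_simps)
    moreover have "(1 - tau0) * bf q \<ge> 0" using t0pos that by simp
    ultimately have "tau0 * af q > 0" by linarith
    then show ?thesis using t0pos by (simp add: zero_less_mult_iff)
  qed
  have visv: "open_segment a v \<inter> polygon p n = {}"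
  proof (rule ccontr)
    assume "open_segment a v \<inter> polygon p n \<noteq> {}"
    then obtain z where zs: "z \<in> open_segment a v" and zP: "z \<in> polygon p n" by blast
    then obtain rho where rho: "0 < rho" "rho < 1" "z = (1-rho) *\<^sub>R a + rho *\<^sub>R v"
      unfolding in_segment by auto
    have za0: "af z = rho * af v" "bf z = rho * bf v"
      unfolding rho(3) affa affb using aa by simp_all
    then have za: "af z = rho * af v" "bf z = rho * bf v" "Sf z = rho * Sf v"
      unfolding Sf_def by (simp_all add: algebra_simps)
    have Gz: "Gf z = 0" unfolding Gf_def za using tau0 vV by simp
    have Sz1: "Sf z < Sf v" unfolding za(3) using mult_strict_right_mono[of rho 1 "Sf v"] rho vV by simp
    have Sz: "Sf z < S0" "Sf z > 0" "Sf z < 1"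
      using Sz1 vV(4) j0(3) unfolding v_def apply linarith
      using za(3) vV rho apply simp
      using Sz1 vV(4) by linarith
    have bz: "bf z > 0" "af z \<ge> 0" using za vV rho by auto
    have zk: "z \<notin> poly_edge p n k" using Sedge Sz by fastforce
    obtain m where m: "m < n" "z \<in> poly_edge p n m" using zP unfolding polygon_def by auto
    have mk: "m \<noteq> k" using m zk by auto
    define e1 where "e1 = p m"
    define e2 where "e2 = p (Suc m mod n)"
    have m1: "Suc m mod n < n" using m by auto
    have edm: "poly_edge p n m = closed_segment e1 e2" unfolding poly_edge_def e1_def e2_def ..
    have segsub: "closed_segment z e \<subseteq> polygon p n" if "e \<in> {e1, e2}" for e
    proof -
      have "closed_segment z e \<subseteq> closed_segment e1 e2"
        using that m(2) edm by (intro convex_contains_segment[THEN iffD1, rule_format]) auto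
      then show ?thesis using edge_sub[OF m(1)] edm by auto
    qed
    have evert: "\<exists>i. i \<in> {m, Suc m mod n} \<and> e = p i" if "e \<in> {e1, e2}" for e
      using that e1_def e2_def by auto
    show False
    proof (cases "\<exists>i<n. z = p i")
      case True
      then obtain i where i: "i < n" "z = p i" by auto
      have "i \<in> Vt" unfolding Vt_def using i bz Sz by auto
      moreover have "tau i = tau0" unfolding tau_def using i za vV tau0 rho by simp
      ultimately show False using bad[of i] Sz i by auto
    next
      case False
      then have "z \<noteq> e1" "z \<noteq> e2" using m m1 e1_def e2_def by auto
      then have "z \<in> open_segment e1 e2" using m(2) edm unfolding open_segment_def by auto
      then obtain r where r: "0 < r" "r < 1" "z = (1-r) *\<^sub>R e1 + r *\<^sub>R e2" unfolding in_segment by auto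
      have Gr: "(1-r) * Gf e1 + r * Gf e2 = 0" using Gz affG r(3) by simp
      have Sr: "Sf z = (1-r) * Sf e1 + r * Sf e2" using affS r(3) by simp
      show False
      proof (cases "Gf e1 = 0")
        case True
        then have G2: "Gf e2 = 0" using Gr r by simp
        have Spos: "Sf e > 0" if e: "e \<in> {e1, e2}" "Gf e = 0" for e
        proof (rule ccontr)
          assume "\<not> Sf e > 0"
          then have Se: "Sf e \<le> 0" by simp
          define s where "s = Sf z / (Sf z - Sf e)"
          have s: "0 < s" "s \<le> 1" unfolding s_def using Se Sz by (auto simp: divide_simps)
          define q where "q = (1-s) *\<^sub>R z + s *\<^sub>R e"
          have Sq: "Sf q = 0" unfolding q_def affS s_def using Se Sz by (simp add: field_simps)
          have Gq: "Gf q = 0" unfolding q_def affG using Gz e by simp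
          have "bf q = 0" "af q = 0" using Sq Gq unfolding Gf_def Sf_def by auto
          then have "q = a" using cram[of q] by simp
          moreover have "q \<in> closed_segment z e" unfolding q_def in_segment using s by (intro exI[of _ s]) simp
          ultimately show False using segsub[OF e(1)] aP by auto
        qed
        have "Sf e1 \<le> Sf z \<or> Sf e2 \<le> Sf z"
        proof (rule ccontr)
          assume "\<not> ?thesis"
          then have "(1-r) * Sf e1 + r * Sf e2 > (1-r) * Sf z + r * Sf z"
            using r by (intro add_less_le_mono mult_strict_left_mono mult_left_mono) auto
          then show False using Sr by (simp add: algebra_simps)
        qed
        then obtain e where e: "e \<in> {e1, e2}" "Sf e \<le> Sf z" by auto
        have Ge: "Gf e = 0" using e True G2 by auto
        have Se: "Sf e > 0" using Spos[OF e(1) Ge] .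
        obtain i where i: "i \<in> {m, Suc m mod n}" "e = p i" using evert[OF e(1)] by auto
        have i_n: "i < n" using i m m1 by auto
        have bfe: "bf e = tau0 * Sf e" using Ge unfolding Gf_def by simp
        have afe: "af e = (1 - tau0) * Sf e" using bfe unfolding Sf_def by (simp add: algebra_simps)
        have "i \<in> Vt" unfolding Vt_def using i i_n bfe afe t0pos Se e Sz by auto
        moreover have "tau i = tau0" unfolding tau_def using i bfe Se by simp
        ultimately show False using bad[of i] e Sz i by auto
      next
        case False
        have "Gf e1 < 0 \<or> Gf e2 < 0"
        proof (rule ccontr)
          assume "\<not> ?thesis"
          then have "Gf e1 > 0" "Gf e2 \<ge> 0" using False by auto
          then have "(1-r) * Gf e1 + r * Gf e2 > 0" using r
            by (simp add: add_pos_nonneg)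
          then show False using Gr by simp
        qed
        then obtain e where e: "e \<in> {e1, e2}" "Gf e < 0" by auto
        obtain i where i: "i \<in> {m, Suc m mod n}" "e = p i" using evert[OF e(1)] by auto
        have i_n: "i < n" using i m m1 by auto
        show False
        proof (cases "bf e \<ge> 0 \<and> Sf e \<le> 1")
          case True
          have "af e > 0" using Gneg_a e True by auto
          then have "i \<in> Vt" "Sf (p i) > 0" unfolding Vt_def using i i_n True Sf_def by auto
          moreover have "tau i < tau0" using Gneg[of i] e i calculation by auto
          ultimately show False using bad by auto
        next
          case False
          obtain s where s: "0 < s" "s \<le> 1" "(1-s) * bf z + s * bf e \<ge> 0"
            "(1-s) * Sf z + s * Sf e \<le> 1"
            "(1-s) * bf z + s * bf e = 0 \<or> (1-s) * Sf z + s * Sf e = 1"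
            using cross01[OF bz(1) Sz(3) False] by blast
          define q where "q = (1-s) *\<^sub>R z + s *\<^sub>R e"
          have bq: "bf q = (1-s) * bf z + s * bf e" unfolding q_def affb ..
          have Sq: "Sf q = (1-s) * Sf z + s * Sf e" unfolding q_def affS ..
          have Gq: "Gf q < 0" unfolding q_def affG using Gz e s by (simp add: mult_pos_neg)
          have aq: "af q > 0" using Gneg_a Gq bq s by auto
          have qP: "q \<in> poly_edge p n m"
          proof -
            have "closed_segment z e \<subseteq> closed_segment e1 e2"
              using e(1) m(2) edm by (intro convex_contains_segment[THEN iffD1, rule_format]) auto
            moreover have "q \<in> closed_segment z e" unfolding q_def in_segment using s by (intro exI[of _ s]) simp
            ultimately show ?thesis using edm by auto
          qed
          have qpoly: "q \<in> polygon p n" using qP edge_sub[OF m(1)] by auto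
          show False
          proof (cases "bf q = 0")
            case True
            have qa: "q - a = af q *\<^sub>R X" using cram[of q] True by simp
            have aq1: "af q \<le> 1" using Sq s True unfolding Sf_def by simp
            show False
            proof (cases "af q = 1")
              case True
              then have "q = x" using qa X_def by simp
              then have "x \<in> poly_edge p n m" using qP by simp
              then obtain i' where "i' < n" "x = p i'" using simple_inter[OF sp k m(1) mk[symmetric] xe] by auto
              then show False using xnv by auto
            next
              case False
              then have "af q < 1" using aq1 by simp
              then have "q \<in> open_segment a x"
                unfolding in_segment using aq qa X_def aa
                by (intro conjI exI[of _ "af q"]) (auto simp: algebra_simps)
              then show False using vis qpoly by auto
            qed
          next
            case False
            then have Sq1: "Sf q = 1" using s bq Sq by auto
            have bq0: "bf q \<ge> 0" "bf q \<le> 1" using s bq Sq1 aq unfolding Sf_def by auto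
            have "q = (1 - bf q) *\<^sub>R x + bf q *\<^sub>R w"
            proof -
              have afq: "af q = 1 - bf q" using Sq1 unfolding Sf_def by simp
              have "q - a = (1 - bf q) *\<^sub>R (x - a) + bf q *\<^sub>R (w - a)"
                using cram[of q] unfolding afq X_def W_def .
              then have "q = a + ((1 - bf q) *\<^sub>R (x - a) + bf q *\<^sub>R (w - a))"
                by (metis add.commute diff_add_cancel)
              then show ?thesis by (simp add: algebra_simps)
            qed
            then have "q \<in> closed_segment x w" unfolding in_segment using bq0 by auto
            moreover have "closed_segment x w \<subseteq> closed_segment u w"
              using xe edge by (intro convex_contains_segment[THEN iffD1, rule_format]) auto
            ultimately have "q \<in> poly_edge p n k" using edge by auto
            then obtain i' where i': "i' < n" "q = p i'"
              using simple_inter[OF sp k m(1) mk[symmetric] _ qP] by auto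
            have "i' \<in> Vt" unfolding Vt_def using i' aq bq0 Sq1 by auto
            moreover have "tau i' < tau0" using Gneg[of i'] Gq i' Sq1 by auto
            ultimately show False using bad by auto
          qed
        qed
      qed
    qed
  qed
  show ?thesis
    using visv j0n vV cram[of v] unfolding v_def X_def W_def
    by (intro exI[of _ j0] conjI) auto
qed


lemma good_dir:
  fixes p :: "nat \<Rightarrow> real^2" and n :: nat
  assumes "\<forall>i<n. p i \<noteq> (a::real^2)"
  shows "\<exists>d. d \<noteq> 0 \<and> (\<forall>i<n. det2 d (p i - a) \<noteq> 0)"
proof -
  define F where "F = (\<lambda>i. (p i - a)$2 / (p i - a)$1) ` {..<n}"
  have "finite F" unfolding F_def by (rule finite_imageI) (rule finite_lessThan)
  then obtain c where c: "c \<notin> F" using ex_new_if_finite[OF infinite_UNIV_char_0] by blast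
  define d :: "real^2" where "d = vector [1, c]"
  have "d \<noteq> 0" unfolding d_def by (metis vector_2(1) zero_index zero_neq_one)
  moreover have "det2 d (p i - a) \<noteq> 0" if i: "i < n" for i
  proof
    assume h: "det2 d (p i - a) = 0"
    define q where "q = p i - a"
    have hq: "q$2 = c * q$1" using h unfolding det2_def d_def q_def by simp
    have "q \<noteq> 0" using assms i unfolding q_def by auto
    then have "q$1 \<noteq> 0 \<or> q$2 \<noteq> 0" by (simp add: vec_eq_iff forall_2)
    then have q1: "q$1 \<noteq> 0" using hq by auto
    then have "c = q$2 / q$1" using hq by simp
    then have "c \<in> F" unfolding F_def q_def using i by auto
    then show False using c by simp
  qed
  ultimately show ?thesis by blast
qed

lemma hit_data:
  fixes p :: "nat \<Rightarrow> real^2" and n :: nat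
  assumes sp: "simple_closed_polygon p n" and aP: "a \<notin> polygon p n"
    and nd: "\<forall>i<n. det2 d (p i - a) \<noteq> 0" and d: "d \<noteq> 0"
    and ray: "ray a d \<inter> polygon p n \<noteq> {}"
  shows "\<exists>l>0. \<exists>j1<n. \<exists>j2<n.
     open_segment a (p j1) \<inter> polygon p n = {} \<and> open_segment a (p j2) \<inter> polygon p n = {} \<and>
     l * det2 d (p j1 - a) * det2 (p j2 - a) (p j1 - a) > 0 \<and>
     det2 d (p j1 - a) * det2 d (p j2 - a) < 0"
proof -
  obtain l where l: "l > 0" "a + l *\<^sub>R d \<in> polygon p n"
    "open_segment a (a + l *\<^sub>R d) \<inter> polygon p n = {}"
    using first_hit[OF d aP ray] by blast
  define x where "x = a + l *\<^sub>R d"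
  have xa: "x - a = l *\<^sub>R d" unfolding x_def by simp
  obtain k where k: "k < n" "x \<in> poly_edge p n k" using l(2) unfolding x_def polygon_def by auto
  have k1: "Suc k mod n < n" using k by auto
  have ndx: "\<forall>i<n. det2 (x - a) (p i - a) \<noteq> 0" using nd l(1) unfolding xa by simp
  have "x \<noteq> p k" "x \<noteq> p (Suc k mod n)" using ndx k k1 by (metis det2_self)+
  then have "x \<in> open_segment (p k) (p (Suc k mod n))"
    using k(2) unfolding poly_edge_def open_segment_def by auto
  then obtain t where t: "0 < t" "t < 1" "x = (1-t) *\<^sub>R p k + t *\<^sub>R p (Suc k mod n)"
    unfolding in_segment by auto
  have visx: "open_segment a x \<inter> polygon p n = {}" using l(3) x_def by simp
  obtain j1 \<alpha>1 \<beta>1 where j1: "j1 < n" "open_segment a (p j1) \<inter> polygon p n = {}"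
    "\<alpha>1 \<ge> 0" "\<beta>1 > 0" "p j1 - a = \<alpha>1 *\<^sub>R (x - a) + \<beta>1 *\<^sub>R (p (Suc k mod n) - a)"
    using side_vis[OF sp k(1) k(2) aP visx ndx, of "p (Suc k mod n)" "p k"] by blast
  obtain j2 \<alpha>2 \<beta>2 where j2: "j2 < n" "open_segment a (p j2) \<inter> polygon p n = {}"
    "\<alpha>2 \<ge> 0" "\<beta>2 > 0" "p j2 - a = \<alpha>2 *\<^sub>R (x - a) + \<beta>2 *\<^sub>R (p k - a)"
    using side_vis[OF sp k(1) k(2) aP visx ndx, of "p k" "p (Suc k mod n)"] by blast
  have "l * det2 d (p j1 - a) * det2 (p j2 - a) (p j1 - a) > 0 \<and>
     det2 d (p j1 - a) * det2 d (p j2 - a) < 0"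
    using pair_sign[OF xa _ t(3,1,2) _ j1(5,3,4) j2(5,3,4)] l(1) nd k1 by simp
  then show ?thesis using l(1) j1 j2 by blast
qed


theorem lemma4p2:
  fixes p :: "nat \<Rightarrow> real^2" and n :: nat and a :: "real^2"
  assumes "simple_closed_polygon p n"
    and "n \<ge> 4"
    and "a \<notin> polygon p n"
    and "\<forall>w. w \<noteq> 0 \<longrightarrow> ray a w \<inter> polygon p n \<noteq> {}"
  shows "\<exists>i<n. \<exists>j<n. p i \<noteq> p j \<and> \<not> adjacent_idx n i j \<and>
           open_segment a (p i) \<subseteq> UNIV - polygon p n \<and>
           open_segment a (p j) \<subseteq> UNIV - polygon p n"
proof (rule ccontr)
  assume neg: "\<not> ?thesis"
  have adj: "adjacent_idx n i j" if "i < n" "j < n" "p i \<noteq> p j"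
    "open_segment a (p i) \<inter> polygon p n = {}" "open_segment a (p j) \<inter> polygon p n = {}" for i j
    using neg that by blast
  have "\<forall>i<n. p i \<noteq> a" using vert_in assms(3) by metis
  then obtain d where d: "d \<noteq> 0" "\<forall>i<n. det2 d (p i - a) \<noteq> 0" using good_dir by blast
  have md: "\<forall>i<n. det2 (- d) (p i - a) \<noteq> 0" "- d \<noteq> 0" using d by auto
  obtain l j1 j2 where h1: "l > 0" "j1 < n" "j2 < n"
     "open_segment a (p j1) \<inter> polygon p n = {}" "open_segment a (p j2) \<inter> polygon p n = {}"
     "l * det2 d (p j1 - a) * det2 (p j2 - a) (p j1 - a) > 0"
     "det2 d (p j1 - a) * det2 d (p j2 - a) < 0"
    using hit_data[OF assms(1,3) d(2,1)] assms(4) d(1) by blast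
  obtain l' j3 j4 where h2: "l' > 0" "j3 < n" "j4 < n"
     "open_segment a (p j3) \<inter> polygon p n = {}" "open_segment a (p j4) \<inter> polygon p n = {}"
     "l' * det2 (- d) (p j3 - a) * det2 (p j4 - a) (p j3 - a) > 0"
     "det2 (- d) (p j3 - a) * det2 (- d) (p j4 - a) < 0"
    using hit_data[OF assms(1,3) md(1,2)] assms(4) md(2) by blast
  define s1 where "s1 = det2 d (p j1 - a)"
  define s2 where "s2 = det2 d (p j2 - a)"
  define s3 where "s3 = det2 d (p j3 - a)"
  define s4 where "s4 = det2 d (p j4 - a)"
  define D21 where "D21 = det2 (p j2 - a) (p j1 - a)"
  define D43 where "D43 = det2 (p j4 - a) (p j3 - a)"
  have A: "s1 * D21 > 0" using h1(1,6) unfolding s1_def D21_def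
    by (simp add: zero_less_mult_iff mult.assoc)
  have A2: "s1 * s2 < 0" using h1(7) unfolding s1_def s2_def .
  have B: "s3 * D43 < 0" using h2(1,6) unfolding s3_def D43_def
    by (simp add: zero_less_mult_iff mult_less_0_iff mult.assoc)
  have B2: "s3 * s4 < 0" using h2(7) unfolding s3_def s4_def by simp
  have n12: "p j1 \<noteq> p j2" using A2 unfolding s1_def s2_def
    by (metis not_square_less_zero)
  have n34: "p j3 \<noteq> p j4" using B2 unfolding s3_def s4_def
    by (metis not_square_less_zero)
  have three: False if "i < n" "open_segment a (p i) \<inter> polygon p n = {}"
    "p i \<noteq> p j1" "p i \<noteq> p j2" for i
  proof -
    have "j1 \<noteq> j2" "i \<noteq> j1" "i \<noteq> j2" using n12 that by auto
    moreover have "adjacent_idx n j1 j2" "adjacent_idx n j2 i" "adjacent_idx n j1 i"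
      using adj h1 that n12 by auto
    ultimately show False using tri_adj[OF assms(2) h1(2,3) that(1)] by auto
  qed
  have c3: "p j3 = p j1 \<or> p j3 = p j2" using three[OF h2(2,4)] by blast
  have c4: "p j4 = p j1 \<or> p j4 = p j2" using three[OF h2(3,5)] by blast
  show False
  proof (cases "p j3 = p j1")
    case True
    then have "p j4 = p j2" using c4 n34 by auto
    then have "s3 * D43 = s1 * D21" using True unfolding s1_def s3_def D21_def D43_def by simp
    then show False using A B by simp
  next
    case False
    then have e3: "p j3 = p j2" and e4: "p j4 = p j1" using c3 c4 n34 by auto
    have "s3 * D43 = - (s2 * D21)" using e3 e4 unfolding s2_def s3_def D21_def D43_def
      by (simp add: det2_swap[of "p j1 - a"])
    then have C: "s2 * D21 > 0" using B by simp
    have "(s1 * D21) * (s2 * D21) > 0" using A C by simp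
    moreover have "(s1 * D21) * (s2 * D21) = (s1 * s2) * (D21 * D21)" by (simp add: algebra_simps)
    moreover have "(s1 * s2) * (D21 * D21) \<le> 0" using A2 by (simp add: mult_nonpos_nonneg)
    ultimately show False by simp
  qed
qed

end
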